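(* Let $c>\frac12$ and $\delta>0$ be fixed. Let $\ell\ge4$ and let $\ell_1,\ell_2,\ell_3,\ell_4$ be positive integers with $\ell_1+\ell_2+\ell_3+\ell_4=\ell$. Then there exist constants $K>0$ and $0<\rho<1$, depending only on $\ell,c,\delta$ (not on $n$), such that for all $n\ge1$ $$V_n^{-2\ell c}\int_{\mathbb R^n}\int_{\mathbb R^n}f^*_{c,\delta}(\mathbf x_1)^{\ell_1}f^*_{c,\delta}(\mathbf x_2)^{\ell_2}f^*_{c,\delta}(\mathbf x_1+\mathbf x_2)^{\ell_3}f^*_{c,\delta}(\mathbf x_1-\mathbf x_2)^{\ell_4}\,d\mathbf x_1\,d\mathbf x_2\le K\rho^n.$$
   Context: $V_n=\pi^{n/2}/\Gamma(\frac n2+1)$ is the volume of the unit ball in $\mathbb R^n$, $R_n(\delta)=(\delta/V_n)^{1/n}$, and $f^*_{c,\delta}:\mathbb R^n\to\mathbb R$ is $f^*_{c,\delta}(\mathbf x)=\big(|\mathbf x|^n+R_n(\delta)^n\big)^{-2c}$ (this is the spherical symmetrization of $\mathbf x\mapsto|\mathbf x|^{-2cn}\mathbf 1_{|\mathbf x|>R_n(\delta)}$). *)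

theory Defs
  imports "HOL-Analysis.Analysis" "HOL-Probability.Probability"
begin

text \<open>Points of R^n are modelled as functions nat => real restricted to indices below n;
  Lebesgue measure on R^n is the product measure PiM {..<n} (%_. lborel).\<close>

definition lebesgue_n :: "nat \<Rightarrow> (nat \<Rightarrow> real) measure" where
  "lebesgue_n n = PiM {..<n} (\<lambda>_. lborel)"

definition enorm_n :: "nat \<Rightarrow> (nat \<Rightarrow> real) \<Rightarrow> real" where
  "enorm_n n x = sqrt (\<Sum>i<n. (x i)\<^sup>2)"

definition vadd :: "(nat \<Rightarrow> real) \<Rightarrow> (nat \<Rightarrow> real) \<Rightarrow> nat \<Rightarrow> real" where
  "vadd x y = (\<lambda>i. x i + y i)"

definition vsub :: "(nat \<Rightarrow> real) \<Rightarrow> (nat \<Rightarrow> real) \<Rightarrow> nat \<Rightarrow> real" where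
  "vsub x y = (\<lambda>i. x i - y i)"

text \<open>Volume of the unit ball in R^n.\<close>
definition V :: "nat \<Rightarrow> real" where
  "V n = pi powr (real n / 2) / Gamma (real n / 2 + 1)"

definition R :: "nat \<Rightarrow> real \<Rightarrow> real" where
  "R n \<delta> = (\<delta> / V n) powr (1 / real n)"

definition fstar :: "nat \<Rightarrow> real \<Rightarrow> real \<Rightarrow> (nat \<Rightarrow> real) \<Rightarrow> real" where
  "fstar n c \<delta> x = ((enorm_n n x) ^ n + (R n \<delta>) ^ n) powr (-2 * c)"

end

theory Submission imports Defs "HOL-Real_Asymp.Real_Asymp" begin


lemma V_eq: "V n = unit_ball_vol (real n)"
  by (simp add: V_def unit_ball_vol_def)

lemma V_pos: "V n > 0" by (simp add: V_eq)

lemma enorm_meas[measurable]: "enorm_n n \<in> borel_measurable (lebesgue_n n)"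
  unfolding enorm_n_def lebesgue_n_def by measurable

lemma sf: "sigma_finite_measure (lebesgue_n n)"
  unfolding lebesgue_n_def
  by (rule product_sigma_finite.sigma_finite) (auto simp: product_sigma_finite_def intro: lborel.sigma_finite_measure_axioms)

lemma ball_meas:
  assumes "r > 0"
  shows "emeasure (lebesgue_n n) {x \<in> space (lebesgue_n n). enorm_n n x \<le> r} = ennreal (V n * r ^ n)"
proof -
  have "{x \<in> space (lebesgue_n n). enorm_n n x \<le> r} = {f. sqrt (\<Sum>i\<in>{..<n}. (f i)\<^sup>2) \<le> r} \<inter> space (Pi\<^sub>M {..<n} (\<lambda>_. lborel))"
    by (auto simp: enorm_n_def lebesgue_n_def)
  then show ?thesis using emeasure_cball_aux[of "{..<n}" r] assms by (simp add: lebesgue_n_def V_eq)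
qed

lemma tl: "c > 1/2 \<Longrightarrow> \<delta> > 0 \<Longrightarrow> ((\<lambda>t::real. -((t+\<delta>) powr (-2*c))) \<longlongrightarrow> 0) at_top"
  by real_asymp



lemma FTC1:
  assumes c: "c > 1/2" and d: "\<delta> > 0" and a: "a \<ge> 0"
  shows "(\<integral>\<^sup>+t. ennreal (2*c*(t+\<delta>) powr (-2*c-1)) * indicator {a..} t \<partial>lborel) = ennreal ((a+\<delta>) powr (-2*c))"
proof -
  have "(\<integral>\<^sup>+t. ennreal (2*c*(t+\<delta>) powr (-2*c-1)) * indicator {a..} t \<partial>lborel) = 0 - (-((a+\<delta>) powr (-2*c)))"
  proof (rule nn_integral_FTC_atLeast[where F="\<lambda>t. -((t+\<delta>) powr (-2*c))"])
    show "(\<lambda>t. 2*c*(t+\<delta>) powr (-2*c-1)) \<in> borel_measurable borel" by measurable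
    show "((\<lambda>t. -((t+\<delta>) powr (-2*c))) \<longlongrightarrow> 0) at_top" using c d by real_asymp
  next
    fix x assume "a \<le> x"
    then have x: "x + \<delta> > 0" using a d by linarith
    show "0 \<le> 2*c*(x+\<delta>) powr (-2*c-1)" using c by simp
    show "((\<lambda>t. -((t+\<delta>) powr (-2*c))) has_real_derivative 2*c*(x+\<delta>) powr (-2*c-1)) (at x)"
      using x by (auto intro!: derivative_eq_intros simp: algebra_simps)
  qed
  then show ?thesis by simp
qed

lemma FTC2:
  assumes c: "c > 1/2" and d: "\<delta> > 0"
  shows "(\<integral>\<^sup>+t. ennreal ((t+\<delta>) powr (-2*c)) * indicator {0..} t \<partial>lborel) = ennreal (\<delta> powr (1-2*c) / (2*c-1))"
proof -
  have "(\<integral>\<^sup>+t. ennreal ((t+\<delta>) powr (-2*c)) * indicator {0..} t \<partial>lborel) = 0 - (-((0+\<delta>) powr (1-2*c) / (2*c-1)))"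
  proof (rule nn_integral_FTC_atLeast[where F="\<lambda>t. -((t+\<delta>) powr (1-2*c) / (2*c-1))"])
    show "(\<lambda>t. (t+\<delta>) powr (-2*c)) \<in> borel_measurable borel" by measurable
    show "((\<lambda>t. -((t+\<delta>) powr (1-2*c) / (2*c-1))) \<longlongrightarrow> 0) at_top" using c d by real_asymp
  next
    fix x :: real assume "0 \<le> x"
    then have x: "x + \<delta> > 0" using d by linarith
    show "0 \<le> (x+\<delta>) powr (-2*c)" by simp
    show "((\<lambda>t. -((t+\<delta>) powr (1-2*c) / (2*c-1))) has_real_derivative (x+\<delta>) powr (-2*c)) (at x)"
    proof -
      have D: "1 + c*(c*4) - c*4 \<noteq> 0" proof -
        have "1 + c*(c*4) - c*4 = (2*c-1)^2" by (simp add: power2_eq_square algebra_simps)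
        then show ?thesis using c by simp
      qed
      have e: "- ((c * (4 * P) - (P + c * (c * (4 * P)))) / (1 + c*(c*4) - c*4)) = P" for P :: real
      proof -
        have "c * (4 * P) - (P + c * (c * (4 * P))) = -(1 + c*(c*4) - c*4) * P" by algebra
        then show ?thesis using D by (simp add: field_simps)
      qed
      show ?thesis using x c by (auto intro!: derivative_eq_intros simp: field_simps) (rule e)
    qed
  qed
  then show ?thesis by simp
qed



lemma enorm_nonneg: "enorm_n n x \<ge> 0" by (simp add: enorm_n_def sum_nonneg)

lemma powr_root_pow: "a > 0 \<Longrightarrow> n \<ge> 1 \<Longrightarrow> (a powr (1 / real n)) ^ n = (a::real)"
  by (simp add: powr_realpow[symmetric] powr_powr)

lemma lemmaA:
  assumes c: "c > 1/2" and d: "\<delta> > 0" and n: "n \<ge> 1" and s: "s > 0"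
  shows "(\<integral>\<^sup>+x. ennreal ((V n * (s * enorm_n n x)^n + \<delta>) powr (-2*c)) \<partial>lebesgue_n n)
         \<le> ennreal (2*c/s^n * (\<delta> powr (1-2*c) / (2*c-1)))"
proof -
  let ?M = "lebesgue_n n"
  define val where "val x = V n * (s * enorm_n n x)^n" for x
  define k where "k t = 2*c*(t+\<delta>) powr (-2*c-1)" for t :: real
  have [measurable]: "val \<in> borel_measurable ?M" unfolding val_def by measurable
  have [measurable]: "k \<in> borel_measurable borel" unfolding k_def by measurable
  have val0: "val x \<ge> 0" for x using V_pos[of n] s enorm_nonneg[of n x] by (simp add: val_def)
  interpret M: sigma_finite_measure ?M by (rule sf)
  interpret P: pair_sigma_finite ?M lborel by standard
  have "(\<integral>\<^sup>+x. ennreal ((V n * (s * enorm_n n x)^n + \<delta>) powr (-2*c)) \<partial>?M)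
      = (\<integral>\<^sup>+x. \<integral>\<^sup>+t. ennreal (k t) * indicator {val x..} t \<partial>lborel \<partial>?M)"
  proof (intro nn_integral_cong)
    fix x
    show "ennreal ((V n * (s * enorm_n n x)^n + \<delta>) powr (-2*c)) = (\<integral>\<^sup>+t. ennreal (k t) * indicator {val x..} t \<partial>lborel)"
      using FTC1[OF c d val0[of x]] unfolding k_def val_def by simp
  qed
  also have "\<dots> = (\<integral>\<^sup>+t. \<integral>\<^sup>+x. ennreal (k t) * indicator {val x..} t \<partial>?M \<partial>lborel)"
  proof (rule P.Fubini'[symmetric])
    have "(\<lambda>p. ennreal (k (snd p)) * indicator {p. val (fst p) \<le> snd p} p) \<in> borel_measurable (?M \<Otimes>\<^sub>M lborel)"
      by measurable
    then show "case_prod (\<lambda>x t. ennreal (k t) * indicator {val x..} t) \<in> borel_measurable (?M \<Otimes>\<^sub>M lborel)"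
      by (rule measurable_cong[THEN iffD1, rotated]) (auto simp: indicator_def)
  qed
  also have "\<dots> = (\<integral>\<^sup>+t. ennreal (k t) * emeasure ?M {x \<in> space ?M. val x \<le> t} \<partial>lborel)"
  proof (intro nn_integral_cong)
    fix t :: real
    have "(\<integral>\<^sup>+x. ennreal (k t) * indicator {val x..} t \<partial>?M) = (\<integral>\<^sup>+x. ennreal (k t) * indicator {x \<in> space ?M. val x \<le> t} x \<partial>?M)"
      by (intro nn_integral_cong) (auto simp: indicator_def)
    also have "\<dots> = ennreal (k t) * emeasure ?M {x \<in> space ?M. val x \<le> t}"
      by (rule nn_integral_cmult_indicator) measurable
    finally show "(\<integral>\<^sup>+x. ennreal (k t) * indicator {val x..} t \<partial>?M) = ennreal (k t) * emeasure ?M {x \<in> space ?M. val x \<le> t}" .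
  qed
  also have "\<dots> \<le> (\<integral>\<^sup>+t. ennreal (2*c/s^n) * (ennreal ((t+\<delta>) powr (-2*c)) * indicator {0..} t) \<partial>lborel)"
  proof (rule nn_integral_mono_AE)
    show "AE t in lborel. ennreal (k t) * emeasure ?M {x \<in> space ?M. val x \<le> t}
        \<le> ennreal (2*c/s^n) * (ennreal ((t+\<delta>) powr (-2*c)) * indicator {0..} t)"
      using AE_lborel_singleton[of 0]
    proof eventually_elim
      case (elim t)
      show ?case
      proof (cases "t > 0")
        case False
        then have "t < 0" using elim by simp
        then have E: "{x \<in> space ?M. val x \<le> t} = {}" using val0 by (smt (verit) Collect_empty_eq)
        show ?thesis by (subst E) simp
      next
        case True
        define r where "r = (t / V n) powr (1 / real n) / s"
        have Vp: "V n > 0" by (rule V_pos)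
        have r0: "r > 0" using True Vp s by (simp add: r_def)
        have rn: "r ^ n = t / V n / s ^ n"
          using True Vp s n by (simp add: r_def power_divide powr_root_pow)
        have "{x \<in> space ?M. val x \<le> t} = {x \<in> space ?M. enorm_n n x \<le> r}"
        proof -
          have "val x \<le> t \<longleftrightarrow> enorm_n n x \<le> r" for x
          proof -
            have N0: "enorm_n n x \<ge> 0" by (rule enorm_nonneg)
            have pos: "V n * s^n > 0" using Vp s by simp
            have tt: "t = (V n * s^n) * r^n" using rn Vp s by (simp add: field_simps)
            have "val x \<le> t \<longleftrightarrow> (V n * s^n) * enorm_n n x ^ n \<le> (V n * s^n) * r^n"
              unfolding tt by (simp add: val_def power_mult_distrib mult_ac)
            also have "\<dots> \<longleftrightarrow> enorm_n n x ^ n \<le> r^n" using pos by (rule mult_le_cancel_left_pos)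
            also have "\<dots> \<longleftrightarrow> enorm_n n x \<le> r"
              using n N0 r0 by (intro power_mono_iff) auto
            finally show ?thesis .
          qed
          then show ?thesis by auto
        qed
        then have em: "emeasure ?M {x \<in> space ?M. val x \<le> t} = ennreal (t / s^n)"
          using ball_meas[OF r0, of n] rn Vp by simp
        have "k t * (t / s^n) \<le> 2*c/s^n * (t+\<delta>) powr (-2*c)"
        proof -
          have "k t * t = 2*c*((t+\<delta>) powr (-2*c-1) * t)" by (simp add: k_def)
          also have "\<dots> \<le> 2*c*((t+\<delta>) powr (-2*c-1) * (t+\<delta>))"
            using c d True by (intro mult_left_mono) auto
          also have "(t+\<delta>) powr (-2*c-1) * (t+\<delta>) = (t+\<delta>) powr (-2*c)"
            using True d by (simp add: powr_diff)
          finally have "k t * t \<le> 2*c*(t+\<delta>) powr (-2*c)" .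
          then show ?thesis using s by (simp add: field_simps divide_right_mono)
        qed
        then show ?thesis using em True c s d
          by (simp add: ennreal_mult'[symmetric] k_def)
      qed
    qed
  qed
  also have "\<dots> = ennreal (2*c/s^n) * (\<integral>\<^sup>+t. ennreal ((t+\<delta>) powr (-2*c)) * indicator {0..} t \<partial>lborel)"
    by (rule nn_integral_cmult) measurable
  also have "\<dots> = ennreal (2*c/s^n * (\<delta> powr (1-2*c) / (2*c-1)))"
    unfolding FTC2[OF c d] using c s d by (subst ennreal_mult[symmetric]) auto
  finally show ?thesis .
qed



lemma pow_le_D:
  fixes G D :: real
  assumes "0 < G" "G \<le> D" "k \<ge> 1"
  shows "G ^ k \<le> G * D ^ (k - 1)"
proof -
  have "G ^ k = G * G ^ (k - 1)" using assms(3) by (simp add: power_eq_if)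
  also have "\<dots> \<le> G * D ^ (k - 1)" using assms by (intro mult_left_mono power_mono) auto
  finally show ?thesis .
qed

lemma abstract_bound:
  fixes G1 G2 G3 G4 H1 H2 D :: real
  assumes g: "0 < G1" "G1 \<le> D" "0 < G2" "G2 \<le> D" "0 < G3" "G3 \<le> D" "0 < G4" "G4 \<le> D"
    and h: "0 \<le> H1" "0 \<le> H2" "min G3 G4 \<le> H1 + H2"
    and l: "l1 \<ge> 1" "l2 \<ge> 1" "l3 \<ge> 1" "l4 \<ge> 1"
  shows "G1^l1 * G2^l2 * G3^l3 * G4^l4 \<le> D^(l1+l2+l3+l4-2) * (G2 * H1 + G1 * H2)"
proof -
  have D0: "D > 0" using g by linarith
  have "G1^l1 * G2^l2 * G3^l3 * G4^l4 \<le> (G1 * D^(l1-1)) * (G2 * D^(l2-1)) * (G3 * D^(l3-1)) * (G4 * D^(l4-1))"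
    using g l by (intro mult_mono pow_le_D) (auto intro!: mult_nonneg_nonneg)
  also have "\<dots> = (G1 * G2 * (G3 * G4)) * D^(l1+l2+l3+l4-4)"
  proof -
    have "D^(l1-1) * D^(l2-1) * D^(l3-1) * D^(l4-1) = D^(l1+l2+l3+l4-4)"
    proof -
      have ex: "(l1-1) + (l2-1) + (l3-1) + (l4-1) = l1+l2+l3+l4-4" using l by arith
      show ?thesis by (simp only: power_add[symmetric] ex)
    qed
    then show ?thesis by (simp add: algebra_simps)
  qed
  also have "\<dots> \<le> (G1 * G2 * (D * (H1 + H2))) * D^(l1+l2+l3+l4-4)"
  proof -
    have "G3 * G4 \<le> D * (H1 + H2)"
    proof (cases "G3 \<le> G4")
      case True
      then have "G3 * G4 \<le> G3 * D" using g by (intro mult_left_mono) auto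
      also have "\<dots> \<le> (H1 + H2) * D" using h True D0 by (intro mult_right_mono) auto
      finally show ?thesis by (simp add: mult.commute)
    next
      case False
      then have "G3 * G4 \<le> D * G4" using g by (intro mult_right_mono) auto
      also have "\<dots> \<le> D * (H1 + H2)" using h False D0 by (intro mult_left_mono) auto
      finally show ?thesis .
    qed
    then show ?thesis using g D0 by (intro mult_right_mono mult_left_mono) auto
  qed
  also have "\<dots> \<le> D^(l1+l2+l3+l4-2) * (G2 * H1 + G1 * H2)"
  proof -
    have e: "D^(l1+l2+l3+l4-2) = D * D * D^(l1+l2+l3+l4-4)"
    proof -
      have ex: "l1+l2+l3+l4-2 = Suc (Suc (l1+l2+l3+l4-4))" using l by arith
      show ?thesis by (simp only: ex power_Suc mult.assoc)
    qed
    have "G1 * G2 * (H1 + H2) \<le> D * (G2 * H1 + G1 * H2)"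
    proof -
      have "G1 * G2 * H1 \<le> D * (G2 * H1)" using g h by (simp add: mult_right_mono mult.assoc mult.left_commute)
      moreover have "G1 * G2 * H2 \<le> D * (G1 * H2)" using g h
        by (metis mult.commute mult.left_commute mult_nonneg_nonneg less_imp_le mult_right_mono)
      ultimately show ?thesis by (simp add: algebra_simps)
    qed
    then have "(G1 * G2 * (D * (H1 + H2))) * D^(l1+l2+l3+l4-4) \<le> (D * (D * (G2 * H1 + G1 * H2))) * D^(l1+l2+l3+l4-4)"
    proof -
      have "D * (G1*G2*(H1+H2)) \<le> D * (D*(G2*H1+G1*H2))" using D0 \<open>G1 * G2 * (H1 + H2) \<le> _\<close> by (intro mult_left_mono) auto
      then have "G1*G2*(D*(H1+H2)) \<le> D*(D*(G2*H1+G1*H2))" by (simp add: ac_simps)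
      then show ?thesis using D0 by (intro mult_right_mono) auto
    qed
    also have "\<dots> = D^(l1+l2+l3+l4-2) * (G2 * H1 + G1 * H2)" unfolding e by (simp add: algebra_simps)
    finally show ?thesis .
  qed
  finally show ?thesis .
qed



definition Gf :: "nat \<Rightarrow> real \<Rightarrow> real \<Rightarrow> real \<Rightarrow> real" where
  "Gf n c \<delta> r = (V n * r^n + \<delta>) powr (-2*c)"

lemma Gf_pos:
  assumes "\<delta> > 0" "r \<ge> 0" shows "0 < Gf n c \<delta> r"
proof -
  have "0 \<le> V n * r^n" using V_pos[of n] assms by simp
  then have "V n * r^n + \<delta> > 0" using assms by linarith
  then show ?thesis unfolding Gf_def by simp
qed

lemma Gf_anti:
  assumes "c > 0" "\<delta> > 0" "0 \<le> a" "a \<le> b"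
  shows "Gf n c \<delta> b \<le> Gf n c \<delta> a"
  unfolding Gf_def
proof (rule powr_mono2')
  show "- 2 * c \<le> 0" using assms by simp
  show "0 < V n * a ^ n + \<delta>" using assms V_pos[of n] by (simp add: add_nonneg_pos)
  show "V n * a ^ n + \<delta> \<le> V n * b ^ n + \<delta>" using assms V_pos[of n] by (simp add: power_mono)
qed

lemma Gf_le_D:
  assumes "c > 0" "\<delta> > 0" "0 \<le> r" "n \<ge> 1"
  shows "Gf n c \<delta> r \<le> \<delta> powr (-2*c)"
proof -
  have "Gf n c \<delta> r \<le> Gf n c \<delta> 0" using assms by (intro Gf_anti) auto
  also have "\<dots> = \<delta> powr (-2*c)" using assms by (simp add: Gf_def zero_power)
  finally show ?thesis .
qed

lemma parallelogram:
  "(enorm_n n (vadd x y))^2 + (enorm_n n (vsub x y))^2 = 2 * (enorm_n n x)^2 + 2 * (enorm_n n y)^2"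
proof -
  have "(\<Sum>i<n. (x i + y i)\<^sup>2) + (\<Sum>i<n. (x i - y i)\<^sup>2) = 2 * (\<Sum>i<n. (x i)\<^sup>2) + 2 * (\<Sum>i<n. (y i)\<^sup>2)"
    by (simp add: sum.distrib[symmetric] sum_distrib_left power2_eq_square algebra_simps)
  then show ?thesis by (simp add: enorm_n_def vadd_def vsub_def sum_nonneg)
qed

lemma min_bound:
  assumes "c > 0" "\<delta> > 0"
  shows "min (Gf n c \<delta> (enorm_n n (vadd x y))) (Gf n c \<delta> (enorm_n n (vsub x y)))
        \<le> Gf n c \<delta> (sqrt 2 * enorm_n n x) + Gf n c \<delta> (sqrt 2 * enorm_n n y)"
proof -
  define N3 where "N3 = enorm_n n (vadd x y)"
  define N4 where "N4 = enorm_n n (vsub x y)"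
  define m where "m = min (enorm_n n x) (enorm_n n y)"
  define M where "M = max N3 N4"
  have m0: "m \<ge> 0" using enorm_nonneg[of n x] enorm_nonneg[of n y] by (simp add: m_def)
  have M0: "M \<ge> 0" using enorm_nonneg[of n "vadd x y"] by (simp add: M_def N3_def)
  have "(sqrt 2 * m)^2 = 2 * m^2" by (simp add: power_mult_distrib)
  also have "\<dots> \<le> (enorm_n n x)^2 + (enorm_n n y)^2"
    using enorm_nonneg[of n x] enorm_nonneg[of n y] unfolding m_def
    by (cases "enorm_n n x \<le> enorm_n n y") (auto intro!: add_mono power_mono simp: min_def)
  also have "\<dots> = (N3^2 + N4^2) / 2" using parallelogram[of n x y] by (simp add: N3_def N4_def)
  also have "\<dots> \<le> M^2"
    using enorm_nonneg[of n "vadd x y"] enorm_nonneg[of n "vsub x y"] unfolding M_def N3_def N4_def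
    by (cases "enorm_n n (vadd x y) \<le> enorm_n n (vsub x y)") (auto simp: max_def intro: power_mono)
  finally have sq: "(sqrt 2 * m)^2 \<le> M^2" .
  have "sqrt 2 * m \<le> M" by (rule power2_le_imp_le[OF sq M0])
  moreover have "0 \<le> sqrt 2 * m" using m0 by simp
  ultimately have A: "Gf n c \<delta> M \<le> Gf n c \<delta> (sqrt 2 * m)" by (rule Gf_anti[OF assms, rotated])
  have N30: "N3 \<ge> 0" unfolding N3_def by (rule enorm_nonneg)
  have N40: "N4 \<ge> 0" unfolding N4_def by (rule enorm_nonneg)
  have B: "min (Gf n c \<delta> N3) (Gf n c \<delta> N4) = Gf n c \<delta> M"
  proof (cases "N3 \<le> N4")
    case True
    then have "Gf n c \<delta> N4 \<le> Gf n c \<delta> N3" by (rule Gf_anti[OF assms N30])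
    then show ?thesis using True by (simp add: M_def min_absorb2 max_absorb2)
  next
    case False
    then have "N4 \<le> N3" by simp
    then have "Gf n c \<delta> N3 \<le> Gf n c \<delta> N4" by (rule Gf_anti[OF assms N40])
    then show ?thesis using \<open>N4 \<le> N3\<close> by (simp add: M_def min_absorb1 max_absorb1)
  qed
  have p1: "0 < Gf n c \<delta> (sqrt 2 * enorm_n n x)" using enorm_nonneg[of n x] by (intro Gf_pos[OF assms(2)]) simp
  have p2: "0 < Gf n c \<delta> (sqrt 2 * enorm_n n y)" using enorm_nonneg[of n y] by (intro Gf_pos[OF assms(2)]) simp
  have C: "Gf n c \<delta> (sqrt 2 * m) \<le> Gf n c \<delta> (sqrt 2 * enorm_n n x) + Gf n c \<delta> (sqrt 2 * enorm_n n y)"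
  proof (cases "enorm_n n x \<le> enorm_n n y")
    case True
    then have "m = enorm_n n x" by (simp add: m_def)
    then show ?thesis using p2 by simp
  next
    case False
    then have "m = enorm_n n y" by (simp add: m_def)
    then show ?thesis using p1 by simp
  qed
  have "min (Gf n c \<delta> N3) (Gf n c \<delta> N4) \<le> Gf n c \<delta> (sqrt 2 * enorm_n n x) + Gf n c \<delta> (sqrt 2 * enorm_n n y)"
    using A B C by linarith
  then show ?thesis by (simp only: N3_def N4_def)
qed

lemma fstar_eq:
  assumes "\<delta> > 0" "n \<ge> 1"
  shows "fstar n c \<delta> x = V n powr (2*c) * Gf n c \<delta> (enorm_n n x)"
proof -
  have Vp: "V n > 0" by (rule V_pos)
  have Rn: "R n \<delta> ^ n = \<delta> / V n" unfolding R_def using assms Vp by (intro powr_root_pow divide_pos_pos)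
  have "enorm_n n x ^ n + \<delta> / V n = (V n * enorm_n n x ^ n + \<delta>) / V n" using Vp by (simp add: field_simps)
  then have "fstar n c \<delta> x = ((V n * enorm_n n x ^ n + \<delta>) / V n) powr (-2*c)"
    by (simp add: fstar_def Rn)
  also have "\<dots> = (V n * enorm_n n x ^ n + \<delta>) powr (-2*c) / V n powr (-2*c)"
    by (rule powr_divide)
  also have "\<dots> = V n powr (2*c) * Gf n c \<delta> (enorm_n n x)"
    by (simp add: Gf_def powr_minus divide_inverse)
  finally show ?thesis .
qed



theorem proposition5p3:
  fixes c \<delta> :: real and l :: nat
  assumes "c > 1/2" and "\<delta> > 0" and "l \<ge> 4"
  shows "\<exists>K \<rho>. K > 0 \<and> 0 < \<rho> \<and> \<rho> < 1 \<and>
    (\<forall>l1 l2 l3 l4 :: nat. l1 > 0 \<longrightarrow> l2 > 0 \<longrightarrow> l3 > 0 \<longrightarrow> l4 > 0 \<longrightarrow>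
       l1 + l2 + l3 + l4 = l \<longrightarrow>
       (\<forall>n::nat. n \<ge> 1 \<longrightarrow>
          ennreal (V n powr (-2 * real l * c)) *
          (\<integral>\<^sup>+ x1. \<integral>\<^sup>+ x2.
              ennreal (fstar n c \<delta> x1 ^ l1 * fstar n c \<delta> x2 ^ l2 *
                       fstar n c \<delta> (vadd x1 x2) ^ l3 * fstar n c \<delta> (vsub x1 x2) ^ l4)
            \<partial>lebesgue_n n \<partial>lebesgue_n n)
          \<le> ennreal (K * \<rho> ^ n)))"
proof -
  note c = assms(1) and d = assms(2)
  have c0: "c > 0" using c by simp
  define D where "D = \<delta> powr (-2*c)"
  define C0 where "C0 = 2*c*(\<delta> powr (1-2*c) / (2*c-1))"
  define K where "K = 2 * D^(l-2) * C0^2"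
  define \<rho> where "\<rho> = 1 / sqrt 2"
  have D0: "D > 0" using d by (simp add: D_def)
  have C00: "C0 > 0" using c d by (simp add: C0_def)
  have K0: "K > 0" using D0 C00 by (simp add: K_def)
  have r0: "0 < \<rho>" "\<rho> < 1" by (simp_all add: \<rho>_def)
  have main: "ennreal (V n powr (-2 * real l * c)) *
          (\<integral>\<^sup>+ x1. \<integral>\<^sup>+ x2.
              ennreal (fstar n c \<delta> x1 ^ l1 * fstar n c \<delta> x2 ^ l2 *
                       fstar n c \<delta> (vadd x1 x2) ^ l3 * fstar n c \<delta> (vsub x1 x2) ^ l4)
            \<partial>lebesgue_n n \<partial>lebesgue_n n) \<le> ennreal (K * \<rho> ^ n)"
    if l1: "l1 > 0" and l2: "l2 > 0" and l3: "l3 > 0" and l4: "l4 > 0"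
      and lsum: "l1 + l2 + l3 + l4 = l" and n: "n \<ge> 1" for l1 l2 l3 l4 n :: nat
  proof -
    let ?M = "lebesgue_n n"
    define g where "g x = Gf n c \<delta> (enorm_n n x)" for x
    define h where "h x = Gf n c \<delta> (sqrt 2 * enorm_n n x)" for x
    define W where "W = V n powr (2*c)"
    define E where "E = W^l * D^(l-2)"
    have Vp: "V n > 0" by (rule V_pos)
    have W0: "W > 0" using Vp by (simp add: W_def)
    have E0: "E > 0" using W0 D0 by (simp add: E_def)
    have gm[measurable]: "g \<in> borel_measurable ?M" unfolding g_def Gf_def by measurable
    have hm[measurable]: "h \<in> borel_measurable ?M" unfolding h_def Gf_def by measurable
    have g0: "g x > 0" for x unfolding g_def by (rule Gf_pos[OF d enorm_nonneg])
    have h0: "h x > 0" for x unfolding h_def using enorm_nonneg[of n x] by (intro Gf_pos[OF d]) simp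
    have gD: "g x \<le> D" for x unfolding g_def D_def by (rule Gf_le_D[OF c0 d enorm_nonneg n])
    define Ig where "Ig = (\<integral>\<^sup>+x. ennreal (g x) \<partial>?M)"
    define Ih where "Ih = (\<integral>\<^sup>+x. ennreal (h x) \<partial>?M)"
    have Ig: "Ig \<le> ennreal C0"
      using lemmaA[OF c d n, of 1] by (simp add: Ig_def g_def Gf_def C0_def)
    have Ih: "Ih \<le> ennreal (C0 / sqrt 2 ^ n)"
    proof -
      have "Ih \<le> ennreal (2*c/sqrt 2^n * (\<delta> powr (1-2*c) / (2*c-1)))"
        using lemmaA[OF c d n, of "sqrt 2"] by (simp add: Ih_def h_def Gf_def)
      also have "2*c/sqrt 2^n * (\<delta> powr (1-2*c) / (2*c-1)) = C0 / sqrt 2 ^ n"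
        by (simp add: C0_def)
      finally show ?thesis .
    qed
    have pw: "fstar n c \<delta> x1 ^ l1 * fstar n c \<delta> x2 ^ l2 *
                       fstar n c \<delta> (vadd x1 x2) ^ l3 * fstar n c \<delta> (vsub x1 x2) ^ l4
         \<le> E * (g x2 * h x1 + g x1 * h x2)" for x1 x2
    proof -
      have "fstar n c \<delta> x1 ^ l1 * fstar n c \<delta> x2 ^ l2 *
                       fstar n c \<delta> (vadd x1 x2) ^ l3 * fstar n c \<delta> (vsub x1 x2) ^ l4
          = W^(l1+l2+l3+l4) * (g x1 ^ l1 * g x2 ^ l2 * g (vadd x1 x2) ^ l3 * g (vsub x1 x2) ^ l4)"
        by (simp add: fstar_eq[OF d n] g_def W_def power_mult_distrib power_add)
      also have "\<dots> \<le> W^(l1+l2+l3+l4) * (D^(l1+l2+l3+l4-2) * (g x2 * h x1 + g x1 * h x2))"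
      proof (rule mult_left_mono)
        show "0 \<le> W^(l1+l2+l3+l4)" using W0 by simp
        show "g x1 ^ l1 * g x2 ^ l2 * g (vadd x1 x2) ^ l3 * g (vsub x1 x2) ^ l4
              \<le> D^(l1+l2+l3+l4-2) * (g x2 * h x1 + g x1 * h x2)"
          using g0 gD h0 l1 l2 l3 l4 min_bound[OF c0 d, of n x1 x2]
          by (intro abstract_bound) (auto simp: g_def h_def intro: less_imp_le)
      qed
      also have "\<dots> = E * (g x2 * h x1 + g x1 * h x2)" by (simp add: E_def lsum)
      finally show ?thesis .
    qed
    have inner: "(\<integral>\<^sup>+x2. ennreal (E * (g x2 * h x1 + g x1 * h x2)) \<partial>?M)
        = ennreal (E * h x1) * Ig + ennreal (E * g x1) * Ih" for x1
    proof -
      have "(\<integral>\<^sup>+x2. ennreal (E * (g x2 * h x1 + g x1 * h x2)) \<partial>?M)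
          = (\<integral>\<^sup>+x2. ennreal (E * h x1) * ennreal (g x2) + ennreal (E * g x1) * ennreal (h x2) \<partial>?M)"
      proof (rule nn_integral_cong)
        fix x2
        have eq: "E * (g x2 * h x1 + g x1 * h x2) = (E * h x1) * g x2 + (E * g x1) * h x2" by (simp add: algebra_simps)
        show "ennreal (E * (g x2 * h x1 + g x1 * h x2)) = ennreal (E * h x1) * ennreal (g x2) + ennreal (E * g x1) * ennreal (h x2)"
        proof -
          have p: "0 \<le> E * h x1" "0 \<le> g x2" "0 \<le> E * g x1" "0 \<le> h x2"
            using E0 g0[of x1] g0[of x2] h0[of x1] h0[of x2] by simp_all
          show ?thesis unfolding eq
            by (simp only: ennreal_plus[OF mult_nonneg_nonneg[OF p(1) p(2)] mult_nonneg_nonneg[OF p(3) p(4)]]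
                ennreal_mult[OF p(1) p(2)] ennreal_mult[OF p(3) p(4)])
        qed
      qed
      also have "\<dots> = ennreal (E * h x1) * Ig + ennreal (E * g x1) * Ih"
        by (simp add: nn_integral_add nn_integral_cmult Ig_def Ih_def)
      finally show ?thesis .
    qed
    have outer: "(\<integral>\<^sup>+x1. ennreal (E * h x1) * Ig + ennreal (E * g x1) * Ih \<partial>?M)
        = 2 * ennreal E * Ig * Ih"
    proof -
      have "(\<integral>\<^sup>+x1. ennreal (E * h x1) * Ig + ennreal (E * g x1) * Ih \<partial>?M)
          = (\<integral>\<^sup>+x1. (ennreal E * Ig) * ennreal (h x1) + (ennreal E * Ih) * ennreal (g x1) \<partial>?M)"
      proof (rule nn_integral_cong)
        fix x1
        have "ennreal (E * h x1) = ennreal E * ennreal (h x1)" using E0 h0[of x1] by (intro ennreal_mult) auto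
        moreover have "ennreal (E * g x1) = ennreal E * ennreal (g x1)" using E0 g0[of x1] by (intro ennreal_mult) auto
        ultimately show "ennreal (E * h x1) * Ig + ennreal (E * g x1) * Ih = (ennreal E * Ig) * ennreal (h x1) + (ennreal E * Ih) * ennreal (g x1)"
          by (simp only: ac_simps)
      qed
      also have "\<dots> = (ennreal E * Ig) * Ih + (ennreal E * Ih) * Ig"
        by (simp add: nn_integral_add nn_integral_cmult Ig_def Ih_def)
      also have "\<dots> = 2 * ennreal E * Ig * Ih"
      proof -
        have e: "(ennreal E * Ih) * Ig = ennreal E * Ig * Ih" by (simp only: ac_simps)
        show ?thesis unfolding e by (simp only: mult.assoc mult_2 distrib_right)
      qed
      finally show ?thesis .
    qed
    have "ennreal (V n powr (-2 * real l * c)) *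
          (\<integral>\<^sup>+ x1. \<integral>\<^sup>+ x2.
              ennreal (fstar n c \<delta> x1 ^ l1 * fstar n c \<delta> x2 ^ l2 *
                       fstar n c \<delta> (vadd x1 x2) ^ l3 * fstar n c \<delta> (vsub x1 x2) ^ l4)
            \<partial>?M \<partial>?M)
       \<le> ennreal (V n powr (-2 * real l * c)) *
          (\<integral>\<^sup>+ x1. \<integral>\<^sup>+ x2. ennreal (E * (g x2 * h x1 + g x1 * h x2)) \<partial>?M \<partial>?M)"
      by (intro mult_left_mono nn_integral_mono ennreal_leI pw) simp
    also have "ennreal (V n powr (-2 * real l * c)) * (\<integral>\<^sup>+ x1. \<integral>\<^sup>+ x2. ennreal (E * (g x2 * h x1 + g x1 * h x2)) \<partial>?M \<partial>?M)
       = ennreal (V n powr (-2 * real l * c)) * (2 * ennreal E * Ig * Ih)"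
      by (simp only: inner outer)
    also have "ennreal (V n powr (-2 * real l * c)) * (2 * ennreal E * Ig * Ih)
        \<le> ennreal (V n powr (-2 * real l * c)) * (2 * ennreal E * ennreal C0 * ennreal (C0 / sqrt 2 ^ n))"
      by (intro mult_left_mono mult_mono Ig Ih) auto
    also have "\<dots> = ennreal (V n powr (-2 * real l * c) * (2 * E * C0 * (C0 / sqrt 2 ^ n)))"
    proof -
      let ?a = "V n powr (-2 * real l * c)" and ?q = "C0 / sqrt 2 ^ n"
      have a0: "0 \<le> ?a" by simp
      have q0: "0 \<le> ?q" using C00 by simp
      have e1: "2 * ennreal E = ennreal (2*E)" using E0 by (simp add: ennreal_mult)
      have e2: "ennreal (2*E) * ennreal C0 = ennreal (2*E*C0)" using E0 C00 by (intro ennreal_mult[symmetric]) auto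
      have e3: "ennreal (2*E*C0) * ennreal ?q = ennreal (2*E*C0*?q)" using E0 C00 q0 by (intro ennreal_mult[symmetric]) auto
      have e4: "ennreal ?a * ennreal (2*E*C0*?q) = ennreal (?a*(2*E*C0*?q))" using E0 C00 q0 a0 by (intro ennreal_mult[symmetric]) auto
      show ?thesis by (simp only: e1 e2 e3 e4)
    qed
    also have "ennreal (V n powr (-2 * real l * c) * (2 * E * C0 * (C0 / sqrt 2 ^ n))) = ennreal (K * \<rho> ^ n)"
    proof -
      let ?a = "V n powr (-2 * real l * c)"
      have one: "?a * W^l = 1"
        using Vp by (simp add: W_def powr_power powr_add[symmetric])
      have aE: "?a * E = D^(l-2)" unfolding E_def mult.assoc[symmetric] one by simp
      have "?a * (2 * E * C0 * (C0 / sqrt 2 ^ n)) = 2 * (?a * E) * C0 * (C0 / sqrt 2 ^ n)"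
        by (simp only: ac_simps)
      also have "\<dots> = K * \<rho> ^ n"
        unfolding aE by (simp add: K_def \<rho>_def power_one_over power2_eq_square)
      finally show ?thesis by simp
    qed
    finally show ?thesis .
  qed
  show ?thesis using K0 r0 main by blast
qed

end
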